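(* Define polynomials $P_k(x)\in\mathbb{Q}[x]$ by $P_0(x):=0$, $P_1(x):=1$, and for $k\ge2$ $$P_k(x):=-\frac{1}{(2k-1)(k-1)}\sum_{i=1}^{k-1}\left(6x\binom{2k}{2i}(2^{2i-1}-1)+\binom{2k}{2i+2}(2^{2i+1}-1)-2^{2i}\binom{2k}{2i+1}+\binom{2k}{2i}\right)P_{k-i}(x).$$ Then for $k\ge2$ we have the recurrence $$P_k(x)=(1-12x)P_{k-1}(x)-36x^2P_{k-2}(x),$$ and the explicit formula $$P_k(x)=2^{1-2k}\sum_{j=0}^{k-1}\binom{2k}{2j+1}(1-24x)^j=\frac{1}{\sqrt{1-24x}}\left(\left(\frac{1+\sqrt{1-24x}}{2}\right)^{2k}-\left(\frac{1-\sqrt{1-24x}}{2}\right)^{2k}\right).$$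
   Context: These are the polynomials $P_k$ for which the rank moment generating functions satisfy $\mathcal{R}_{2k}=P_k(\delta_q)\mathcal{R}_2+(\text{terms built from crank moments})$, where $\delta_q=q\frac{d}{dq}$; the defining recursion above is the one induced on the coefficient of $\mathcal{R}_2$. In the last expression any fixed branch of the square root may be taken. *)

theory Defs
  imports Complex_Main "HOL-Computational_Algebra.Polynomial"
begin

function P :: "nat \<Rightarrow> rat poly" where
  "P k = (if k = 0 then 0 else if k = 1 then 1 else
     smult (- (1 / ((2 * of_nat k - 1) * (of_nat k - 1))))
       (\<Sum>i\<in>{1..k-1}.
          (smult (6 * of_nat ((2*k) choose (2*i)) * ((2::rat) ^ (2*i-1) - 1)) [:0, 1:]
           + [: of_nat ((2*k) choose (2*i+2)) * ((2::rat) ^ (2*i+1) - 1)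
                - (2::rat) ^ (2*i) * of_nat ((2*k) choose (2*i+1))
                + of_nat ((2*k) choose (2*i)) :])
          * P (k - i)))"
  by pat_completeness auto
termination
  by (relation "measure id") auto

end

theory Submission
  imports Defs
begin


lemma bin_split:
  fixes y t :: complex
  shows "(y+t)^(2*k) = (\<Sum>i=0..k. of_nat (2*k choose (2*i)) * t^(2*i) * y^(2*k-2*i))
     + (\<Sum>i<k. of_nat (2*k choose (2*i+1)) * t^(2*i+1) * y^(2*k-(2*i+1)))"
proof -
  define g where "g j = of_nat (2*k choose j) * t^j * y^(2*k-j)" for j
  have "(y+t)^(2*k) = (\<Sum>j\<le>2*k. g j)"
    using binomial_ring[of t y "2*k"] by (simp add: g_def add.commute)
  also have "\<dots> = (\<Sum>j\<le>Suc(2*k). g j)" by (simp add: g_def)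
  also have "\<dots> = (\<Sum>i\<le>k. g (2*i) + g (Suc (2*i)))" by (rule sum.in_pairs_0)
  also have "\<dots> = (\<Sum>i\<le>k. g (2*i)) + (\<Sum>i\<le>k. g (Suc (2*i)))" by (simp add: sum.distrib)
  also have "(\<Sum>i\<le>k. g (Suc (2*i))) = (\<Sum>i<k. g (Suc (2*i)))"
    by (simp add: lessThan_Suc_atMost[symmetric] g_def)
  finally show ?thesis by (simp add: g_def atLeast0AtMost)
qed

lemma EVsum:
  fixes y t :: complex
  shows "(\<Sum>i=0..k. of_nat (2*k choose (2*i)) * t^(2*i) * y^(2*k-2*i)) = ((y+t)^(2*k) + (y-t)^(2*k))/2"
  using bin_split[of y t k] bin_split[of y "-t" k] by (simp add: power_mult sum_negf)

lemma ODsum: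
  fixes y t :: complex
  shows "(\<Sum>i<k. of_nat (2*k choose (2*i+1)) * t^(2*i+1) * y^(2*k-(2*i+1))) = ((y+t)^(2*k) - (y-t)^(2*k))/2"
  using bin_split[of y t k] bin_split[of y "-t" k] by (simp add: power_mult sum_negf)



lemma trim: "1 \<le> (k::nat) \<Longrightarrow> sum h {0..k} = h 0 + sum h {1..k-1} + (h k::complex)"
proof -
  assume "1 \<le> k" then obtain m where k: "k = Suc m" by (cases k) auto
  have "sum h {0..Suc m} = sum h {0..m} + h (Suc m)" by (rule sum.atLeast0_atMost_Suc)
  also have "sum h {0..m} = h 0 + sum h {Suc 0..m}" by (rule sum.atLeast_Suc_atMost) simp
  finally show ?thesis by (simp add: k)
qed

lemma trim2: "1 \<le> (k::nat) \<Longrightarrow> sum h {..<k} = h 0 + (sum h {1..k-1}::complex)"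
proof -
  assume "1 \<le> k" then obtain m where k: "k = Suc m" by (cases k) auto
  have "{..<Suc m} = insert 0 {1..m}" by auto
  then show ?thesis by (simp add: k)
qed

lemma P1:
  fixes y :: complex assumes "1 \<le> k"
  shows "(\<Sum>i=1..k-1. of_nat (2*k choose (2*i)) * (2^(2*i-1) - 1) * y^(2*(k-i)))
     = (1/2)*(((y+2)^(2*k) + (y-2)^(2*k))/2 - y^(2*k) - 4^k) - (((y+1)^(2*k) + (y-1)^(2*k))/2 - y^(2*k) - 1)"
proof -
  define h where "h i = of_nat (2*k choose (2*i)) * (2^(2*i)/2 - 1) * y^(2*k-2*i)" for i :: nat
  have A: "(\<Sum>i=1..k-1. of_nat (2*k choose (2*i)) * (2^(2*i-1) - 1) * y^(2*(k-i))) = sum h {1..k-1}"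
  proof (rule sum.cong)
    fix i assume "i \<in> {1..k-1}"
    then have "(2::complex)^(2*i) = 2 * 2^(2*i-1)" by (cases i) auto
    then show "of_nat (2*k choose (2*i)) * (2^(2*i-1) - 1) * y^(2*(k-i)) = h i"
      by (simp add: h_def diff_mult_distrib2)
  qed simp
  have B: "sum h {0..k} = (1/2) * (\<Sum>i=0..k. of_nat (2*k choose (2*i)) * 2^(2*i) * y^(2*k-2*i))
      - (\<Sum>i=0..k. of_nat (2*k choose (2*i)) * 1^(2*i) * y^(2*k-2*i))"
    by (simp add: h_def sum_distrib_left sum_subtractf[symmetric] algebra_simps)
  have C: "sum h {0..k} = (1/2)*(((y+2)^(2*k) + (y-2)^(2*k))/2) - ((y+1)^(2*k) + (y-1)^(2*k))/2"
    unfolding B by (simp only: EVsum)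
  have D: "(2::complex)^(2*k) = 4^k" by (simp add: power_mult)
  have E: "h 0 = -(y^(2*k)/2)" "h k = 4^k/2 - 1" by (simp_all add: h_def D)
  show ?thesis using trim[OF assms, of h] A C E by (simp add: algebra_simps)
qed

lemma P2:
  fixes y :: complex assumes "2 \<le> k"
  shows "(\<Sum>i=1..k-1. of_nat (2*k choose (2*i+2)) * (2^(2*i+1) - 1) * y^(2*(k-i)))
     = y^2*((1/2)*(((y+2)^(2*k) + (y-2)^(2*k))/2 - y^(2*k)) - (((y+1)^(2*k) + (y-1)^(2*k))/2 - y^(2*k)))
       - of_nat (2*k choose 2) * y^(2*k)"
proof -
  define g where "g j = of_nat (2*k choose (2*j)) * (2^(2*j)/2 - 1) * y^2 * y^(2*k-2*j)" for j :: nat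
  have A: "(\<Sum>i=1..k-1. of_nat (2*k choose (2*i+2)) * (2^(2*i+1) - 1) * y^(2*(k-i))) = (\<Sum>i=1..k-1. g (i+1))"
  proof (rule sum.cong)
    fix i assume i: "i \<in> {1..k-1}"
    then have "2*(k-i) = 2 + (2*k - 2*(i+1))" by auto
    then have "y^(2*(k-i)) = y^2 * y^(2*k - 2*(i+1))" by (metis power_add)
    then show "of_nat (2*k choose (2*i+2)) * (2^(2*i+1) - 1) * y^(2*(k-i)) = g (i+1)"
      by (simp add: g_def algebra_simps power2_eq_square)
  qed simp
  have A2: "(\<Sum>i=1..k-1. g (i+1)) = sum g {1+1..k-1+1}" by (rule sum.shift_bounds_cl_nat_ivl[symmetric])
  have A3: "{1+1..k-1+1} = {2..k}" using assms by auto
  have S1: "sum g {0..k} = g 0 + sum g {Suc 0..k}" by (rule sum.atLeast_Suc_atMost) simp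
  have S2: "sum g {Suc 0..k} = g (Suc 0) + sum g {Suc (Suc 0)..k}" by (rule sum.atLeast_Suc_atMost) (use assms in simp)
  have S3: "{Suc (Suc 0)..k} = {2..k}" by auto
  have B: "sum g {0..k} = y^2 * ((1/2) * (\<Sum>i=0..k. of_nat (2*k choose (2*i)) * 2^(2*i) * y^(2*k-2*i))
      - (\<Sum>i=0..k. of_nat (2*k choose (2*i)) * 1^(2*i) * y^(2*k-2*i)))"
    by (simp add: g_def sum_distrib_left sum_subtractf[symmetric] algebra_simps)
  have C: "sum g {0..k} = y^2*((1/2)*(((y+2)^(2*k) + (y-2)^(2*k))/2) - ((y+1)^(2*k) + (y-1)^(2*k))/2)"
    unfolding B by (simp only: EVsum)
  have "2*k = 2 + (2*k-2)" using assms by simp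
  then have "y^2 * y^(2*k-2) = y^(2*k)" by (metis power_add)
  moreover have "g 1 = of_nat (2*k choose 2) * (2^2/2-1) * y^2 * y^(2*k-2)" by (simp only: g_def mult_1_right)
  ultimately have G1: "g (Suc 0) = of_nat (2*k choose 2) * y^(2*k)" by (simp add: algebra_simps)
  have G0: "g 0 = -(y^2 * y^(2*k) / 2)" by (simp add: g_def)
  have L: "(\<Sum>i=1..k-1. of_nat (2*k choose (2*i+2)) * (2^(2*i+1) - 1) * y^(2*(k-i))) = sum g {2..k}"
    by (simp only: A A2 A3)
  have "sum g {0..k} = g 0 + (g (Suc 0) + sum g {2..k})" by (simp only: S1 S2 S3)
  then have M: "sum g {2..k} = sum g {0..k} - g 0 - g (Suc 0)" by simp
  show ?thesis unfolding L M C G0 G1 by (simp add: field_simps)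
qed

lemma P3:
  fixes y :: complex assumes "1 \<le> k"
  shows "(\<Sum>i=1..k-1. 2^(2*i) * of_nat (2*k choose (2*i+1)) * y^(2*(k-i)))
     = (y/2)*(((y+2)^(2*k) - (y-2)^(2*k))/2) - 2 * of_nat k * y^(2*k)"
proof -
  define h where "h i = (y/2) * (of_nat (2*k choose (2*i+1)) * 2^(2*i+1) * y^(2*k-(2*i+1)))" for i :: nat
  have "(\<Sum>i=1..k-1. 2^(2*i) * of_nat (2*k choose (2*i+1)) * y^(2*(k-i))) = sum h {1..k-1}"
  proof (rule sum.cong)
    fix i assume i: "i \<in> {1..k-1}"
    then have "2*(k-i) = Suc (2*k - (2*i+1))" by auto
    then show "2^(2*i) * of_nat (2*k choose (2*i+1)) * y^(2*(k-i)) = h i"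
      by (simp add: h_def algebra_simps)
  qed simp
  also have "\<dots> = sum h {..<k} - h 0" using trim2[OF assms, of h] by simp
  also have "sum h {..<k} = (y/2)*(((y+2)^(2*k) - (y-2)^(2*k))/2)"
    unfolding h_def by (simp only: sum_distrib_left[symmetric] ODsum)
  also have "h 0 = 2 * of_nat k * (y * y^(2*k-1))" by (simp add: h_def)
  also have "y * y^(2*k-1) = y^(2*k)" using assms by (simp add: power_Suc[symmetric])
  finally show ?thesis .
qed

lemma P4:
  fixes y :: complex assumes "1 \<le> k"
  shows "(\<Sum>i=1..k-1. of_nat (2*k choose (2*i)) * y^(2*(k-i)))
     = ((y+1)^(2*k) + (y-1)^(2*k))/2 - y^(2*k) - 1"
proof -
  define h where "h i = of_nat (2*k choose (2*i)) * 1^(2*i) * y^(2*k-2*i)" for i :: nat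
  have "(\<Sum>i=1..k-1. of_nat (2*k choose (2*i)) * y^(2*(k-i))) = sum h {1..k-1}"
    by (rule sum.cong) (simp_all add: h_def diff_mult_distrib2)
  also have "\<dots> = sum h {0..k} - h 0 - h k" using trim[OF assms, of h] by simp
  also have "sum h {0..k} = ((y+1)^(2*k) + (y-1)^(2*k))/2" unfolding h_def by (rule EVsum)
  finally show ?thesis by (simp add: h_def)
qed



abbreviation cp :: "rat poly \<Rightarrow> complex poly" where "cp \<equiv> map_poly of_rat"

lemma cp_add: "cp (p + q) = cp p + cp q"
  by (rule poly_eqI) (simp add: coeff_map_poly of_rat_add)
lemma cp_diff: "cp (p - q) = cp p - cp q"
  by (rule poly_eqI) (simp add: coeff_map_poly of_rat_diff)
lemma cp_minus: "cp (- p) = - cp p"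
  by (rule poly_eqI) (simp add: coeff_map_poly of_rat_minus)
lemma cp_smult: "cp (smult c p) = smult (of_rat c) (cp p)"
  by (rule map_poly_smult) (simp_all add: of_rat_mult)
lemma cp_pCons: "cp (pCons c p) = pCons (of_rat c) (cp p)"
  by (rule map_poly_pCons) simp
lemma cp_mult: "cp (p * q) = cp p * cp q"
  by (induct p) (simp_all add: cp_add cp_smult cp_pCons)
lemma cp_sum: "cp (sum f A) = (\<Sum>a\<in>A. cp (f a))"
  by (induct A rule: infinite_finite_induct) (simp_all add: cp_add)
lemma cp_power: "cp (p ^ n) = cp p ^ n"
  by (induct n) (simp_all add: cp_mult)

lemma ev_P:
  assumes "2 \<le> k"
  shows "poly (cp (P k)) x = -(1 / ((2 * of_nat k - 1) * (of_nat k - 1))) *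
     (\<Sum>i=1..k-1. (6 * of_nat ((2*k) choose (2*i)) * (2 ^ (2*i-1) - 1) * x
        + (of_nat ((2*k) choose (2*i+2)) * (2 ^ (2*i+1) - 1) - 2 ^ (2*i) * of_nat ((2*k) choose (2*i+1))
           + of_nat ((2*k) choose (2*i)))) * poly (cp (P (k-i))) x)"
  using assms
  apply (subst P.simps)
  apply (simp del: P.simps add: cp_minus cp_add cp_diff cp_smult cp_pCons cp_mult cp_sum poly_sum of_rat_mult of_rat_diff of_rat_add of_rat_divide of_rat_power)
  apply (rule disjI2, rule sum.cong, simp, simp add: algebra_simps)
  done



definition Tc :: "complex \<Rightarrow> complex \<Rightarrow> complex \<Rightarrow> complex \<Rightarrow> complex \<Rightarrow> complex \<Rightarrow> complex \<Rightarrow> complex \<Rightarrow> complex \<Rightarrow> complex" where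
  "Tc y p U V W X Z F K = p*((1/2)*((W+X)/2 - Z - F) - ((U+V)/2 - Z - 1))
     + (y^2*((1/2)*((W+X)/2 - Z) - ((U+V)/2 - Z)) - K*(2*K-1)*Z)
     - ((y/2)*((W-X)/2) - 2*K*Z) + ((U+V)/2 - Z - 1)"

lemma final_alg:
  "(2*K-1)*(K-1)*(Z - V) + Tc a (a*(1-a)) U V W X Z F K - Tc (1-a) (a*(1-a)) X Z Y U V F K = 0"
  by (simp add: Tc_def field_simps power2_eq_square)

lemma choose2: "1 \<le> k \<Longrightarrow> (of_nat (2*k choose 2) :: complex) = of_nat k * (2 * of_nat k - 1)"
proof -
  assume k: "1 \<le> k"
  have "2*k choose 2 = k * (2*k-1)" by (simp add: choose_two)
  then have "(of_nat (2*k choose 2) :: complex) = of_nat k * of_nat (2*k-1)" by simp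
  also have "(of_nat (2*k-1) :: complex) = 2 * of_nat k - 1" using k by (simp add: of_nat_diff)
  finally show ?thesis .
qed

definition R :: "nat \<Rightarrow> complex \<Rightarrow> nat \<Rightarrow> complex" where
  "R k x i = 6 * of_nat ((2*k) choose (2*i)) * (2 ^ (2*i-1) - 1) * x
        + (of_nat ((2*k) choose (2*i+2)) * (2 ^ (2*i+1) - 1) - 2 ^ (2*i) * of_nat ((2*k) choose (2*i+1))
           + of_nat ((2*k) choose (2*i)))"

lemma Tclosed:
  fixes y x :: complex assumes k: "2 \<le> k"
  shows "(\<Sum>i=1..k-1. R k x i * y^(2*(k-i))) =
    Tc y (6*x) ((y+1)^(2*k)) ((y-1)^(2*k)) ((y+2)^(2*k)) ((y-2)^(2*k)) (y^(2*k)) (4^k) (of_nat k)"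
proof -
  have "(\<Sum>i=1..k-1. R k x i * y^(2*(k-i))) =
     6*x*(\<Sum>i=1..k-1. of_nat (2*k choose (2*i)) * (2^(2*i-1) - 1) * y^(2*(k-i)))
     + (\<Sum>i=1..k-1. of_nat (2*k choose (2*i+2)) * (2^(2*i+1) - 1) * y^(2*(k-i)))
     - (\<Sum>i=1..k-1. 2^(2*i) * of_nat (2*k choose (2*i+1)) * y^(2*(k-i)))
     + (\<Sum>i=1..k-1. of_nat (2*k choose (2*i)) * y^(2*(k-i)))"
    by (simp add: R_def sum.distrib sum_subtractf sum_distrib_left algebra_simps)
  also have "\<dots> = Tc y (6*x) ((y+1)^(2*k)) ((y-1)^(2*k)) ((y+2)^(2*k)) ((y-2)^(2*k)) (y^(2*k)) (4^k) (of_nat k)"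
    using k by (simp only: P1 P2 P3 P4 choose2 Tc_def)
  finally show ?thesis .
qed



definition ff :: "complex \<Rightarrow> nat \<Rightarrow> complex" where
  "ff s m = (((1+s)/2)^(2*m) - ((1-s)/2)^(2*m)) / s"

lemma evp: "(u::complex) = -v \<Longrightarrow> u^(2*k) = v^(2*k)" by simp

lemma fin: "(D::complex) \<noteq> 0 \<Longrightarrow> s \<noteq> 0 \<Longrightarrow> D*E + SA - SB = 0 \<Longrightarrow> E/s = -(1/D) * ((SA - SB)/s)"
proof -
  assume "D \<noteq> 0" "s \<noteq> 0" "D*E + SA - SB = 0"
  then have "SA - SB = -(D*E)" by (simp add: algebra_simps)
  then show ?thesis using \<open>D \<noteq> 0\<close> \<open>s \<noteq> 0\<close> by (simp only: ) (simp add: field_simps)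
qed

lemma key:
  assumes s: "s \<noteq> 0" "s^2 = 1 - 24*x" and k: "2 \<le> k"
  shows "ff s k = -(1/((2*of_nat k - 1)*(of_nat k - 1))) * (\<Sum>i=1..k-1. R k x i * ff s (k-i))"
proof -
  define a where "a = (1+s)/2"
  have b: "(1-s)/2 = 1 - a" by (simp add: a_def field_simps)
  have x6: "6*x = a*(1-a)" using s(2) by (simp add: a_def field_simps power2_eq_square) 
  define D where "D = (2*of_nat k - 1)*(of_nat k - 1 :: complex)"
  have "(2*of_nat k - 1 :: complex) \<noteq> 0"
  proof
    assume "(2*of_nat k - 1 :: complex) = 0"
    then have "(of_nat (2*k) :: complex) = of_nat 1" by simp
    then have "2*k = 1" using of_nat_eq_iff by blast
    then show False by simp
  qed
  moreover have "(of_nat k - 1 :: complex) \<noteq> 0"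
  proof
    assume "(of_nat k - 1 :: complex) = 0"
    then have "(of_nat k :: complex) = of_nat 1" by simp
    then have "k = 1" using of_nat_eq_iff by blast
    then show False using k by simp
  qed
  ultimately have D0: "D \<noteq> 0" by (simp add: D_def)
  have sum_eq: "(\<Sum>i=1..k-1. R k x i * ff s (k-i)) =
     ((\<Sum>i=1..k-1. R k x i * a^(2*(k-i))) - (\<Sum>i=1..k-1. R k x i * (1-a)^(2*(k-i)))) / s"
    by (simp add: ff_def a_def[symmetric] b sum_divide_distrib sum_subtractf[symmetric] algebra_simps)
  have e1: "(1-a+1)^(2*k) = (a-2)^(2*k)" by (rule evp) simp
  have e2: "(1-a-1)^(2*k) = a^(2*k)" by (rule evp) simp
  have e3: "(1-a-2)^(2*k) = (a+1)^(2*k)" by (rule evp) simp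
  have e4: "(1-a)^(2*k) = (a-1)^(2*k)" by (rule evp) simp
  have TA: "(\<Sum>i=1..k-1. R k x i * a^(2*(k-i))) =
      Tc a (a*(1-a)) ((a+1)^(2*k)) ((a-1)^(2*k)) ((a+2)^(2*k)) ((a-2)^(2*k)) (a^(2*k)) (4^k) (of_nat k)"
    using Tclosed[OF k, of x a] x6 by simp
  have TB: "(\<Sum>i=1..k-1. R k x i * (1-a)^(2*(k-i))) =
      Tc (1-a) (a*(1-a)) ((a-2)^(2*k)) (a^(2*k)) ((1-a+2)^(2*k)) ((a+1)^(2*k)) ((a-1)^(2*k)) (4^k) (of_nat k)"
    using Tclosed[OF k, of x "1-a"] x6 e1 e2 e3 e4 by simp
  have F: "D*(a^(2*k) - (a-1)^(2*k)) + (\<Sum>i=1..k-1. R k x i * a^(2*(k-i))) - (\<Sum>i=1..k-1. R k x i * (1-a)^(2*(k-i))) = 0"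
    unfolding TA TB D_def by (rule final_alg)
  have ffk: "ff s k = (a^(2*k) - (a-1)^(2*k)) / s"
    by (simp add: ff_def a_def[symmetric] b e4)
  show ?thesis unfolding sum_eq ffk D_def[symmetric]
    by (rule fin[OF D0 s(1)]) (use F in \<open>simp add: algebra_simps\<close>)
qed



declare P.simps[simp del]

lemma ev_eq:
  assumes s: "s \<noteq> 0" "s^2 = 1 - 24*x"
  shows "poly (cp (P k)) x = ff s k"
proof (induction k rule: less_induct)
  case (less k)
  consider "k = 0" | "k = 1" | "2 \<le> k" by linarith
  then show ?case
  proof cases
    case 1 then show ?thesis by (simp add: ff_def P.simps)
  next
    case 2 
    have "((1+s)/2)^2 - ((1-s)/2)^2 = s" by (simp add: field_simps power2_eq_square)
    then show ?thesis using 2 s(1) by (simp add: ff_def P.simps)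
  next
    case 3
    have "poly (cp (P k)) x = -(1 / ((2 * of_nat k - 1) * (of_nat k - 1))) *
        (\<Sum>i=1..k-1. R k x i * poly (cp (P (k-i))) x)"
      unfolding R_def by (rule ev_P[OF 3])
    also have "(\<Sum>i=1..k-1. R k x i * poly (cp (P (k-i))) x) = (\<Sum>i=1..k-1. R k x i * ff s (k-i))"
      by (rule sum.cong) (auto simp: less.IH)
    finally show ?thesis using key[OF s 3] by simp
  qed
qed

lemma cp_eqI:
  assumes "\<And>x::complex. x \<noteq> 1/24 \<Longrightarrow> poly (cp p) x = poly (cp q) x"
  shows "p = q"
proof -
  have "cp p - cp q = 0"
  proof (rule ccontr)
    assume ne: "cp p - cp q \<noteq> 0"
    have "UNIV - {1/24::complex} \<subseteq> {x. poly (cp p - cp q) x = 0}" using assms by auto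
    moreover have "infinite (UNIV - {1/24::complex})"
      by (simp add: infinite_UNIV_char_0)
    ultimately show False using poly_roots_finite[OF ne] finite_subset by blast
  qed
  then have "cp p = cp q" by simp
  then have "coeff (cp p) n = coeff (cp q) n" for n by simp
  then show ?thesis by (intro poly_eqI) (simp add: coeff_map_poly)
qed

lemma s_exists: "(x::complex) \<noteq> 1/24 \<Longrightarrow> \<exists>s. s \<noteq> 0 \<and> s^2 = 1 - 24*x"
proof -
  assume "x \<noteq> 1/24"
  then have "1 - 24*x \<noteq> 0" by (auto simp: field_simps)
  then show ?thesis by (intro exI[of _ "csqrt (1 - 24*x)"]) auto
qed

lemma ff_rec:
  assumes s: "s \<noteq> 0" "s^2 = 1 - 24*x" and k: "2 \<le> k"
  shows "ff s k = (1 - 12*x) * ff s (k-1) - 36*x^2 * ff s (k-2)"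
proof -
  obtain m where m: "k = m + 2" using k by (metis add.commute le_iff_add)
  define A where "A = ((1+s)/2)^2"
  define B where "B = ((1-s)/2)^2"
  have xs: "x = (1 - s^2)/24" using s(2) by simp
  have AB: "A + B = 1 - 12*x" "A*B = 36*x^2"
    by (simp_all add: A_def B_def xs field_simps power2_eq_square)
  have f: "ff s n = (A^n - B^n)/s" for n by (simp add: ff_def A_def B_def power_mult)
  have I: "A^(m+2) - B^(m+2) = (1-12*x)*(A^(m+1) - B^(m+1)) - 36*x^2*(A^m - B^m)"
    unfolding AB[symmetric] by (simp add: algebra_simps)
  have m1: "m + 2 - 1 = m + 1" "m + 2 - 2 = m" by simp_all
  show ?thesis unfolding m f m1 I using s(1) by (simp add: field_simps)
qed

lemma ff_explicit:
  assumes s: "s \<noteq> 0" "s^2 = 1 - 24*x" and k: "1 \<le> k"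
  shows "ff s k = (1/2)^(2*k-1) * (\<Sum>j=0..k-1. of_nat (2*k choose (2*j+1)) * (1 - 24*x)^j)"
proof -
  define Sm where "Sm = (\<Sum>j<k. of_nat (2*k choose (2*j+1)) * (1 - 24*x)^j)"
  have "(\<Sum>i<k. of_nat (2*k choose (2*i+1)) * s^(2*i+1) * 1^(2*k-(2*i+1))) = ((1+s)^(2*k) - (1-s)^(2*k))/2"
    using ODsum[of k s 1] by (simp add: add.commute)
  moreover have "(\<Sum>i<k. of_nat (2*k choose (2*i+1)) * s^(2*i+1) * 1^(2*k-(2*i+1))) = s * Sm"
    unfolding sum_distrib_left Sm_def
  proof (rule sum.cong)
    fix i assume "i \<in> {..<k}"
    have "s^(2*i+1) = s * (s^2)^i" by (simp add: power_add power_mult)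
    then show "of_nat (2*k choose (2*i+1)) * s^(2*i+1) * 1^(2*k-(2*i+1)) = s * (of_nat (2*k choose (2*i+1)) * (1 - 24*x)^i)"
      by (simp add: s(2))
  qed simp
  ultimately have "s*Sm = ((1+s)^(2*k) - (1-s)^(2*k))/2" by metis
  then have E: "(1+s)^(2*k) - (1-s)^(2*k) = 2*s*Sm" by (simp add: field_simps)
  have Q: "(2::complex)^(2*k) = 2 * 2^(2*k-1)" using k
    by (metis Suc_diff_le mult_2 power_Suc diff_Suc_1 le_add2 le_trans)
  have F0: "ff s k = ((1+s)^(2*k) - (1-s)^(2*k)) / 2^(2*k) / s"
  proof -
    have "((1+s)/2)^(2*k) - ((1-s)/2)^(2*k) = ((1+s)^(2*k) - (1-s)^(2*k)) / 2^(2*k)"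
      by (simp only: power_divide diff_divide_distrib[symmetric])
    then show ?thesis by (simp only: ff_def)
  qed
  have F1: "ff s k = Sm / 2^(2*k-1)" unfolding F0 E Q using s(1) by simp
  have "{0..k-1} = {..<k}" using k by auto
  then have F2: "Sm = (\<Sum>j=0..k-1. of_nat (2*k choose (2*j+1)) * (1 - 24*x)^j)" by (simp add: Sm_def)
  show ?thesis unfolding F1 F2[symmetric] power_one_over by simp
qed



theorem proposition7p1:
  fixes k :: nat
  assumes "k \<ge> 2"
  shows "P k = [:1, -12:] * P (k - 1) - [:0, 0, 36:] * P (k - 2)
       \<and> P k = smult ((1/2) ^ (2*k - 1))
                 (\<Sum>j=0..k-1. smult (of_nat ((2*k) choose (2*j+1))) ([:1, -24:] ^ j))
       \<and> (\<forall>(x::complex) s. 1 - 24 * x \<noteq> 0 \<longrightarrow> s ^ 2 = 1 - 24 * x \<longrightarrow>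
           poly (map_poly of_rat (P k)) x
             = (1 / s) * (((1 + s) / 2) ^ (2*k) - ((1 - s) / 2) ^ (2*k)))"
proof (intro conjI allI impI)
  show "P k = [:1, -12:] * P (k - 1) - [:0, 0, 36:] * P (k - 2)"
  proof (rule cp_eqI)
    fix x :: complex assume "x \<noteq> 1/24"
    then obtain s where s: "s \<noteq> 0" "s^2 = 1 - 24*x" using s_exists by blast
    show "poly (cp (P k)) x = poly (cp ([:1, -12:] * P (k - 1) - [:0, 0, 36:] * P (k - 2))) x"
      using ff_rec[OF s assms] by (simp add: cp_diff cp_add cp_minus cp_smult cp_mult cp_pCons ev_eq[OF s] power2_eq_square algebra_simps)
  qed
  show "P k = smult ((1/2) ^ (2*k - 1))
                 (\<Sum>j=0..k-1. smult (of_nat ((2*k) choose (2*j+1))) ([:1, -24:] ^ j))"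
  proof (rule cp_eqI)
    fix x :: complex assume "x \<noteq> 1/24"
    then obtain s where s: "s \<noteq> 0" "s^2 = 1 - 24*x" using s_exists by blast
    have k1: "1 \<le> k" using assms by simp
    show "poly (cp (P k)) x = poly (cp (smult ((1/2) ^ (2*k - 1))
                 (\<Sum>j=0..k-1. smult (of_nat ((2*k) choose (2*j+1))) ([:1, -24:] ^ j)))) x"
      using ff_explicit[OF s k1] by (simp add: cp_smult cp_sum cp_power cp_pCons poly_sum ev_eq[OF s] of_rat_power of_rat_divide)
        (rule sum.cong; simp add: algebra_simps)
  qed
  fix x s :: complex
  assume "1 - 24 * x \<noteq> 0" "s ^ 2 = 1 - 24 * x"
  then have s: "s \<noteq> 0" "s^2 = 1 - 24*x" by auto
  show "poly (map_poly of_rat (P k)) x = (1 / s) * (((1 + s) / 2) ^ (2*k) - ((1 - s) / 2) ^ (2*k))"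
    using ev_eq[OF s, of k] by (simp add: ff_def)
qed


end
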